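(* Let $M$ have constant sectional curvature $c$ and let $\omega=b_0\alpha_0+b_1\alpha_1+b_2\alpha_2+b_3\,d\theta$ with constant coefficients $b_i\in\mathbb{R}$. Then: (i) $\omega\wedge\omega=2e^{1234}$ if and only if $b_0b_2-b_1^2-b_3^2=1$; (ii) for $\omega$ satisfying (i), the 3-form $\varphi=\theta\wedge\omega$ is a calibration on $T^1M$ if and only if $b_0=b_2=\pm1$ and $b_1=b_3=0$; (iii) for such $\omega=\pm(\alpha_0+\alpha_2)$, the 2-form $\omega$ is closed if and only if $c=1$.
   Context: Let $(M,g)$ be an oriented Riemannian 3-manifold with Levi-Civita connection $\nabla$ and unit tangent sphere bundle $\pi:T^1M\to M$, endowed with (the restriction of) the Sasaki metric $g^S$: the metric on $TM$ for which the splitting $T(TM)=H^\nabla\oplus V$ into the $\nabla$-horizontal and vertical subspaces is orthogonal and both $d\pi|_{H^\nabla}$ and the canonical identification of $V$ with $T_{\pi(u)}M$ are isometries. Let $B$ be the mirror map on $T(TM)$ sending the horizontal lift of a vector to its vertical lift and vertical vectors to $0$. An adapted orthonormal frame at $u\in T^1M$ is $e_0,\dots,e_4$, where $e_0$ is the geodesic spray (the horizontal lift of $u$), $e_1,e_2$ are horizontal lifts of an orthonormal basis of $u^\perp\subset T_{\pi(u)}M$ with $(u,d\pi e_1,d\pi e_2)$ positively oriented, $e_3=Be_1$, $e_4=Be_2$; $T^1M$ is oriented by $e^0\wedge\cdots\wedge e^4$. With $e^0,\dots,e^4$ the dual coframe and $e^{ij}=e^i\wedge e^j$, $e^{1234}=e^1\wedge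 e^2\wedge e^3\wedge e^4$, set $\theta=e^0$ and the globally defined 2-forms $\alpha_0=e^{12}$, $\alpha_1=e^{14}-e^{23}$, $\alpha_2=e^{34}$; then $d\theta=e^{31}+e^{42}$. If $M$ has constant sectional curvature $c$, then $d\alpha_0=\theta\wedge\alpha_1$, $d\alpha_1=2\theta\wedge\alpha_2-2c\,\theta\wedge\alpha_0$, $d\alpha_2=-c\,\theta\wedge\alpha_1$. A calibration is a closed differential form of comass one, i.e. its value on every unit simple $k$-vector is at most $1$, with the value $1$ attained (at least as a supremum) at every point. *)

theory Defs
  imports "HOL-Analysis.Analysis"
begin

text \<open>Pointwise model: the tangent space of T^1M at a point, identified with real^5
  via the adapted orthonormal frame e_0,...,e_4 (index i of type 5 = frame index i).\<close>

type_synonym vec5 = "real ^ 5"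

definition theta :: "vec5 \<Rightarrow> real" where
  "theta u = u $ 0"

definition ee :: "5 \<Rightarrow> 5 \<Rightarrow> vec5 \<Rightarrow> vec5 \<Rightarrow> real" where
  "ee i j u v = u $ i * v $ j - u $ j * v $ i"

definition alpha0 :: "vec5 \<Rightarrow> vec5 \<Rightarrow> real" where
  "alpha0 = ee 1 2"

definition alpha1 :: "vec5 \<Rightarrow> vec5 \<Rightarrow> real" where
  "alpha1 u v = ee 1 4 u v - ee 2 3 u v"

definition alpha2 :: "vec5 \<Rightarrow> vec5 \<Rightarrow> real" where
  "alpha2 = ee 3 4"

definition dtheta :: "vec5 \<Rightarrow> vec5 \<Rightarrow> real" where
  "dtheta u v = ee 3 1 u v + ee 4 2 u v"

definition omega :: "real \<Rightarrow> real \<Rightarrow> real \<Rightarrow> real \<Rightarrow> vec5 \<Rightarrow> vec5 \<Rightarrow> real" where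
  "omega b0 b1 b2 b3 u v =
     b0 * alpha0 u v + b1 * alpha1 u v + b2 * alpha2 u v + b3 * dtheta u v"

definition wedge12 :: "(vec5 \<Rightarrow> real) \<Rightarrow> (vec5 \<Rightarrow> vec5 \<Rightarrow> real) \<Rightarrow> vec5 \<Rightarrow> vec5 \<Rightarrow> vec5 \<Rightarrow> real" where
  "wedge12 a b u v w = a u * b v w - a v * b u w + a w * b u v"

definition wedge13 :: "(vec5 \<Rightarrow> real) \<Rightarrow> (vec5 \<Rightarrow> vec5 \<Rightarrow> vec5 \<Rightarrow> real)
    \<Rightarrow> vec5 \<Rightarrow> vec5 \<Rightarrow> vec5 \<Rightarrow> vec5 \<Rightarrow> real" where
  "wedge13 a b x y z w = a x * b y z w - a y * b x z w + a z * b x y w - a w * b x y z"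

definition wedge22 :: "(vec5 \<Rightarrow> vec5 \<Rightarrow> real) \<Rightarrow> (vec5 \<Rightarrow> vec5 \<Rightarrow> real)
    \<Rightarrow> vec5 \<Rightarrow> vec5 \<Rightarrow> vec5 \<Rightarrow> vec5 \<Rightarrow> real" where
  "wedge22 a b x y z w =
     a x y * b z w - a x z * b y w + a x w * b y z
   + a y z * b x w - a y w * b x z + a z w * b x y"

definition e1234 :: "vec5 \<Rightarrow> vec5 \<Rightarrow> vec5 \<Rightarrow> vec5 \<Rightarrow> real" where
  "e1234 = wedge22 (ee 1 2) (ee 3 4)"

text \<open>Exterior derivative of the constant-coefficient form omega, computed from the
  structure equations for constant curvature c given in the context
  (d alpha0 = theta\<and>alpha1, d alpha1 = 2 theta\<and>alpha2 - 2c theta\<and>alpha0,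
   d alpha2 = -c theta\<and>alpha1, d(d theta) = 0).\<close>

definition d_omega :: "real \<Rightarrow> real \<Rightarrow> real \<Rightarrow> real \<Rightarrow> real \<Rightarrow> vec5 \<Rightarrow> vec5 \<Rightarrow> vec5 \<Rightarrow> real" where
  "d_omega c b0 b1 b2 b3 =
     wedge12 theta (\<lambda>u v. b0 * alpha1 u v + b1 * (2 * alpha2 u v - 2 * c * alpha0 u v)
                          + b2 * (- c * alpha1 u v))"

text \<open>phi = theta \<and> omega, and d phi = d theta \<and> omega - theta \<and> d omega (Leibniz rule).\<close>

definition phi :: "real \<Rightarrow> real \<Rightarrow> real \<Rightarrow> real \<Rightarrow> vec5 \<Rightarrow> vec5 \<Rightarrow> vec5 \<Rightarrow> real" where
  "phi b0 b1 b2 b3 = wedge12 theta (omega b0 b1 b2 b3)"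

definition d_phi :: "real \<Rightarrow> real \<Rightarrow> real \<Rightarrow> real \<Rightarrow> real \<Rightarrow> vec5 \<Rightarrow> vec5 \<Rightarrow> vec5 \<Rightarrow> vec5 \<Rightarrow> real" where
  "d_phi c b0 b1 b2 b3 x y z w =
     wedge22 dtheta (omega b0 b1 b2 b3) x y z w - wedge13 theta (d_omega c b0 b1 b2 b3) x y z w"

definition orthonormal3 :: "vec5 \<Rightarrow> vec5 \<Rightarrow> vec5 \<Rightarrow> bool" where
  "orthonormal3 u v w \<longleftrightarrow> u \<bullet> u = 1 \<and> v \<bullet> v = 1 \<and> w \<bullet> w = 1
      \<and> u \<bullet> v = 0 \<and> u \<bullet> w = 0 \<and> v \<bullet> w = 0"

definition comass_one3 :: "(vec5 \<Rightarrow> vec5 \<Rightarrow> vec5 \<Rightarrow> real) \<Rightarrow> bool" where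
  "comass_one3 f \<longleftrightarrow> (\<forall>u v w. orthonormal3 u v w \<longrightarrow> f u v w \<le> 1)
      \<and> Sup {f u v w | u v w. orthonormal3 u v w} = 1"

definition is_calibration_phi :: "real \<Rightarrow> real \<Rightarrow> real \<Rightarrow> real \<Rightarrow> real \<Rightarrow> bool" where
  "is_calibration_phi c b0 b1 b2 b3 \<longleftrightarrow>
     (\<forall>x y z w. d_phi c b0 b1 b2 b3 x y z w = 0) \<and> comass_one3 (phi b0 b1 b2 b3)"

end

theory Submission
  imports Defs
begin

lemma exhaust_5:
  fixes x :: 5
  shows "x = 0 \<or> x = 1 \<or> x = 2 \<or> x = 3 \<or> x = 4"
proof (induct x)
  case (of_int z)
  then have "z = 0 \<or> z = 1 \<or> z = 2 \<or> z = 3 \<or> z = 4" by fastforce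
  then show ?case by auto
qed

lemma UNIV_5: "UNIV = {0, 1, 2, 3, 4::5}"
  using exhaust_5 by auto

lemma sum_5: "sum f (UNIV::5 set) = f 0 + f 1 + f 2 + f 3 + f 4"
  unfolding UNIV_5 by (simp add: ac_simps)

lemma inner5: "(u::vec5) \<bullet> v = u $ 0 * v $ 0 + u $ 1 * v $ 1 + u $ 2 * v $ 2 + u $ 3 * v $ 3 + u $ 4 * v $ 4"
  by (simp add: inner_vec_def sum_5)

lemmas all_defs = phi_def wedge12_def wedge13_def wedge22_def omega_def theta_def alpha0_def
  alpha1_def alpha2_def dtheta_def ee_def e1234_def d_omega_def d_phi_def

lemma key_ineq:
  fixes u0 u1 u2 u3 u4 v0 v1 v2 v3 v4 w0 w1 w2 w3 w4 :: real
  assumes nu: "u0^2+u1^2+u2^2+u3^2+u4^2 = 1"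
    and nv: "v0^2+v1^2+v2^2+v3^2+v4^2 = 1"
    and nw: "w0^2+w1^2+w2^2+w3^2+w4^2 = 1"
    and uv: "u0 * v0+u1 * v1+u2 * v2+u3 * v3+u4 * v4 = 0"
  shows "\<bar>u0 * (v1 * w2 - v2 * w1 + v3 * w4 - v4 * w3) - v0 * (u1 * w2-u2 * w1+u3 * w4-u4 * w3)
          + w0 * (u1 * v2-u2 * v1+u3 * v4-u4 * v3)\<bar> \<le> 1"
proof -
  define Y0 where "Y0 = u1 * v2-u2 * v1+u3 * v4-u4 * v3"
  define Y1 where "Y1 = v0 * u2 - u0 * v2"
  define Y2 where "Y2 = u0 * v1 - v0 * u1"
  define Y3 where "Y3 = v0 * u4 - u0 * v4"
  define Y4 where "Y4 = u0 * v3 - v0 * u3"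
  define E where "E = u0 * (v1 * w2 - v2 * w1 + v3 * w4 - v4 * w3) - v0 * (u1 * w2-u2 * w1+u3 * w4-u4 * w3)
          + w0 * (u1 * v2-u2 * v1+u3 * v4-u4 * v3)"
  have E: "E = Y0 * w0+Y1 * w1+Y2 * w2+Y3 * w3+Y4 * w4"
    unfolding E_def Y0_def Y1_def Y2_def Y3_def Y4_def by algebra
  define SY where "SY = Y0^2+Y1^2+Y2^2+Y3^2+Y4^2"
  have lag: "SY  *  (w0^2+w1^2+w2^2+w3^2+w4^2) - E^2 =
     (Y0 * w1-Y1 * w0)^2 + (Y0 * w2-Y2 * w0)^2 + (Y0 * w3-Y3 * w0)^2 + (Y0 * w4-Y4 * w0)^2
   + (Y1 * w2-Y2 * w1)^2 + (Y1 * w3-Y3 * w1)^2 + (Y1 * w4-Y4 * w1)^2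
   + (Y2 * w3-Y3 * w2)^2 + (Y2 * w4-Y4 * w2)^2 + (Y3 * w4-Y4 * w3)^2"
    unfolding E SY_def by algebra
  have E2: "E^2 \<le> SY" using lag nw
    by (smt (verit, best) mult_cancel_left1 zero_le_power2)
  define Su where "Su = u1^2+u2^2+u3^2+u4^2"
  define Sv where "Sv = v1^2+v2^2+v3^2+v4^2"
  define P where "P = u1 * v1+u2 * v2+u3 * v3+u4 * v4"
  have Su: "Su = 1 - u0^2" using nu unfolding Su_def by linarith
  have Sv: "Sv = 1 - v0^2" using nv unfolding Sv_def by linarith
  have P: "P = - (u0 * v0)" using uv unfolding P_def by linarith
  have h1: "Y1^2+Y2^2+Y3^2+Y4^2 = u0^2 * Sv + v0^2 * Su - 2 * u0 * v0 * P"
    unfolding Y1_def Y2_def Y3_def Y4_def Sv_def Su_def P_def by algebra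
  have h1': "Y1^2+Y2^2+Y3^2+Y4^2 = u0^2 + v0^2"
    unfolding h1 Su Sv P by algebra
  have h2: "Su * Sv - P^2 - Y0^2 = (u1 * v3 - u3 * v1 - u2 * v4 + u4 * v2)^2 + (u1 * v4 - u4 * v1 + u2 * v3 - u3 * v2)^2"
    unfolding Y0_def Su_def Sv_def P_def by algebra
  have h2': "Y0^2 \<le> Su * Sv - P^2" using h2
    by (smt (verit, best) zero_le_power2)
  have "Su * Sv - P^2 = 1 - u0^2 - v0^2" unfolding Su Sv P by algebra
  hence "SY \<le> 1" using h1' h2' unfolding SY_def by linarith
  hence "E^2 \<le> 1" using E2 by linarith
  hence "\<bar>E\<bar> \<le> 1" by (simp add: abs_square_le_1)
  thus ?thesis unfolding E_def .
qed

lemma ww: "wedge22 (omega b0 b1 b2 b3) (omega b0 b1 b2 b3) x y z w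
   = 2 * (b0 * b2 - b1^2 - b3^2) * e1234 x y z w"
  unfolding all_defs by algebra

lemma dphi0: "d_phi c s 0 s 0 x y z w = 0"
  unfolding all_defs by algebra

lemma dom: "d_omega c s 0 s 0 x y z = s * (1 - c) * wedge12 theta alpha1 x y z"
  unfolding all_defs by algebra

lemma phi_s: "phi s 0 s 0 u v w = s * (u $ 0 * (v $ 1 * w $ 2 - v $ 2 * w $ 1 + v $ 3 * w $ 4 - v $ 4 * w $ 3)
   - v $ 0 * (u $ 1 * w $ 2 - u $ 2 * w $ 1 + u $ 3 * w $ 4 - u $ 4 * w $ 3)
   + w $ 0 * (u $ 1 * v $ 2 - u $ 2 * v $ 1 + u $ 3 * v $ 4 - u $ 4 * v $ 3))"
  unfolding all_defs by algebra

lemma phi_le: assumes "s = 1 \<or> s = -1" "orthonormal3 u v w"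
  shows "phi s 0 s 0 u v w \<le> 1"
proof -
  have "\<bar>u $ 0 * (v $ 1 * w $ 2 - v $ 2 * w $ 1 + v $ 3 * w $ 4 - v $ 4 * w $ 3)
   - v $ 0 * (u $ 1 * w $ 2 - u $ 2 * w $ 1 + u $ 3 * w $ 4 - u $ 4 * w $ 3)
   + w $ 0 * (u $ 1 * v $ 2 - u $ 2 * v $ 1 + u $ 3 * v $ 4 - u $ 4 * v $ 3)\<bar> \<le> 1"
    apply (rule key_ineq)
    using assms(2) by (simp_all add: orthonormal3_def inner5 power2_eq_square)
  thus ?thesis unfolding phi_s using assms(1) by auto
qed

lemma ax: "axis i (1::real) $ j = (if j = i then 1 else 0)"
  by (simp add: axis_def)

theorem proposition2p3:
  fixes c b0 b1 b2 b3 :: real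
  shows "((\<forall>x y z w. wedge22 (omega b0 b1 b2 b3) (omega b0 b1 b2 b3) x y z w = 2 * e1234 x y z w)
           \<longleftrightarrow> b0 * b2 - b1\<^sup>2 - b3\<^sup>2 = 1)
    \<and> (b0 * b2 - b1\<^sup>2 - b3\<^sup>2 = 1 \<longrightarrow>
           (is_calibration_phi c b0 b1 b2 b3
              \<longleftrightarrow> (b0 = b2 \<and> (b0 = 1 \<or> b0 = -1) \<and> b1 = 0 \<and> b3 = 0)))
    \<and> (\<forall>s::real. (s = 1 \<or> s = -1) \<longrightarrow>
           ((\<forall>x y z. d_omega c s 0 s 0 x y z = 0) \<longleftrightarrow> c = 1))"
proof (intro conjI)
  have E: "e1234 (axis 1 1) (axis 2 1) (axis 3 1) (axis 4 1) = 1"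
    by (simp add: all_defs ax)
  show "(\<forall>x y z w. wedge22 (omega b0 b1 b2 b3) (omega b0 b1 b2 b3) x y z w = 2 * e1234 x y z w)
           \<longleftrightarrow> b0 * b2 - b1\<^sup>2 - b3\<^sup>2 = 1"
  proof
    assume "\<forall>x y z w. wedge22 (omega b0 b1 b2 b3) (omega b0 b1 b2 b3) x y z w = 2 * e1234 x y z w"
    from this[rule_format, of "axis 1 1" "axis 2 1" "axis 3 1" "axis 4 1"]
    show "b0 * b2 - b1\<^sup>2 - b3\<^sup>2 = 1" unfolding ww E by simp
  next
    assume "b0 * b2 - b1\<^sup>2 - b3\<^sup>2 = 1"
    thus "\<forall>x y z w. wedge22 (omega b0 b1 b2 b3) (omega b0 b1 b2 b3) x y z w = 2 * e1234 x y z w"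
      unfolding ww by simp
  qed
next
  show "b0 * b2 - b1\<^sup>2 - b3\<^sup>2 = 1 \<longrightarrow>
           (is_calibration_phi c b0 b1 b2 b3
              \<longleftrightarrow> (b0 = b2 \<and> (b0 = 1 \<or> b0 = -1) \<and> b1 = 0 \<and> b3 = 0))"
  proof (intro impI iffI)
    assume k: "b0 * b2 - b1\<^sup>2 - b3\<^sup>2 = 1" and cal: "is_calibration_phi c b0 b1 b2 b3"
    have le: "\<And>u v w. orthonormal3 u v w \<Longrightarrow> phi b0 b1 b2 b3 u v w \<le> 1"
      using cal unfolding is_calibration_phi_def comass_one3_def by blast
    have o1: "orthonormal3 (axis 0 1) (axis 1 1) (axis 2 1)"
      and o2: "orthonormal3 (axis 0 1) (axis 2 1) (axis 1 1)"
      and o3: "orthonormal3 (axis 0 1) (axis 3 1) (axis 4 1)"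
      and o4: "orthonormal3 (axis 0 1) (axis 4 1) (axis 3 1)"
      by (simp_all add: orthonormal3_def inner5 ax)
    have "b0 \<le> 1" using le[OF o1] by (simp add: all_defs ax)
    moreover have "- b0 \<le> 1" using le[OF o2] by (simp add: all_defs ax)
    moreover have "b2 \<le> 1" using le[OF o3] by (simp add: all_defs ax)
    moreover have "- b2 \<le> 1" using le[OF o4] by (simp add: all_defs ax)
    ultimately have a0: "\<bar>b0\<bar> \<le> 1" and a2: "\<bar>b2\<bar> \<le> 1" by auto
    have "\<bar>b0\<bar> * \<bar>b2\<bar> \<le> 1" using a0 a2
      by (metis abs_ge_zero mult_le_one)
    hence p: "b0 * b2 \<le> 1" by (metis abs_mult abs_le_D1 order_trans)
    have "b1^2 + b3^2 \<le> 0" using k p by linarith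
    hence b13: "b1 = 0" "b3 = 0" by (smt (verit) zero_le_power2 power_eq_0_iff)+
    hence b02: "b0 * b2 = 1" using k by simp
    hence "\<bar>b0\<bar> * \<bar>b2\<bar> = 1" by (metis abs_mult abs_one)
    moreover have "\<bar>b0\<bar> * \<bar>b2\<bar> \<le> \<bar>b0\<bar>" using a2 by (simp add: mult_left_le)
    ultimately have "\<bar>b0\<bar> = 1" using a0 by linarith
    moreover have "\<bar>b2\<bar> = 1" using \<open>\<bar>b0\<bar> * \<bar>b2\<bar> = 1\<close> \<open>\<bar>b0\<bar> = 1\<close> by simp
    ultimately show "b0 = b2 \<and> (b0 = 1 \<or> b0 = -1) \<and> b1 = 0 \<and> b3 = 0"
      using b02 b13 by (auto simp: abs_if split: if_splits)
  next
    assume "b0 = b2 \<and> (b0 = 1 \<or> b0 = -1) \<and> b1 = 0 \<and> b3 = 0"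
    then obtain s where s: "s = 1 \<or> s = -1" and bs: "b0 = s" "b2 = s" "b1 = 0" "b3 = 0" by blast
    have o1: "orthonormal3 (axis 0 1) (axis 1 1) (axis 2 1)"
      and o2: "orthonormal3 (axis 0 1) (axis 2 1) (axis 1 1)"
      by (simp_all add: orthonormal3_def inner5 ax)
    have mem: "1 \<in> {phi s 0 s 0 u v w | u v w. orthonormal3 u v w}"
    proof (cases "s = 1")
      case True
      have "phi s 0 s 0 (axis 0 1) (axis 1 1) (axis 2 1) = 1" using True by (simp add: all_defs ax)
      thus ?thesis using o1 by (metis (mono_tags, lifting) mem_Collect_eq)
    next
      case False
      hence "s = -1" using s by simp
      hence "phi s 0 s 0 (axis 0 1) (axis 2 1) (axis 1 1) = 1" by (simp add: all_defs ax)
      thus ?thesis using o2 by (metis (mono_tags, lifting) mem_Collect_eq)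
    qed
    have sup: "Sup {phi s 0 s 0 u v w | u v w. orthonormal3 u v w} = 1"
      apply (rule cSup_eq_maximum[OF mem])
      using phi_le[OF s] by blast
    show "is_calibration_phi c b0 b1 b2 b3"
      unfolding is_calibration_phi_def comass_one3_def bs
      using dphi0 phi_le[OF s] sup by blast
  qed
next
  show "\<forall>s::real. (s = 1 \<or> s = -1) \<longrightarrow>
           ((\<forall>x y z. d_omega c s 0 s 0 x y z = 0) \<longleftrightarrow> c = 1)"
  proof (intro allI impI iffI)
    fix s :: real assume s: "s = 1 \<or> s = -1" and h: "\<forall>x y z. d_omega c s 0 s 0 x y z = 0"
    have "wedge12 theta alpha1 (axis 0 1) (axis 1 1) (axis 4 1) = 1" by (simp add: all_defs ax)
    with h[rule_format, of "axis 0 1" "axis 1 1" "axis 4 1"] have "s * (1 - c) = 0"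
      unfolding dom by simp
    thus "c = 1" using s by auto
  next
    fix s :: real and x y z assume "c = 1"
    thus "d_omega c s 0 s 0 x y z = 0" unfolding dom by simp
  qed
qed

end
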